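(* Let $a\in\mathbb{Z}$, $b\in\mathbb{Z}_{>0}$, $x(1)\in\mathbb{R}$, and $p(1)=a/b$. Define $(p(i),x(i))_{i\ge1}$ by $$p(i+1)=p(i)-\operatorname{sgn}x(i),\qquad x(i+1)=x(i)+p(i)-\operatorname{sgn}x(i).$$ Then the sequence $(x(i))_{i\ge 1}$ is bounded if and only if there exists $k\ge 1$ with $(p(k+1),x(k+1))=(p(1),x(1))$ (in which case the whole sequence $(p(i),x(i))$ is periodic with period $k$).
   Context: Here $\operatorname{sgn}(x)=x/|x|$ for $x\neq 0$ and $\operatorname{sgn}(0)=0$. *)

theory Defs
  imports Complex_Main
begin

text \<open>orbit a b x1 n = (p(n+1), x(n+1)), i.e. index shifted by one.
  p(1) = a/b, x(1) = x1,
  p(i+1) = p(i) - sgn x(i),  x(i+1) = x(i) + p(i) - sgn x(i).\<close>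
primrec orbit :: "int \<Rightarrow> int \<Rightarrow> real \<Rightarrow> nat \<Rightarrow> real \<times> real" where
  "orbit a b x1 0 = (real_of_int a / real_of_int b, x1)"
| "orbit a b x1 (Suc n) =
     (let (p, x) = orbit a b x1 n in (p - sgn x, x + p - sgn x))"

end

theory Submission
  imports Defs
begin

definition T :: "real \<times> real \<Rightarrow> real \<times> real" where
  "T s = (fst s - sgn (snd s), snd s + fst s - sgn (snd s))"

lemma orbit_Suc_T: "orbit a b x1 (Suc n) = T (orbit a b x1 n)"
  by (simp add: T_def split: prod.splits)

lemma T_inj: "T u = T v \<Longrightarrow> u = v"
proof -
  assume h: "T u = T v"
  obtain p x q y where u: "u = (p, x)" and v: "v = (q, y)" by fastforce
  have "p - sgn x = q - sgn y" "x + p - sgn x = y + q - sgn y" using h by (simp_all add: T_def u v)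
  then have "x = y" by linarith
  then show ?thesis using \<open>p - sgn x = q - sgn y\<close> u v by simp
qed

lemma orbit_shift_back:
  "orbit a b x1 (i + d) = orbit a b x1 i \<Longrightarrow> orbit a b x1 d = orbit a b x1 0"
proof (induction i)
  case 0 then show ?case by simp
next
  case (Suc i)
  then have "T (orbit a b x1 (i + d)) = T (orbit a b x1 i)"
    by (simp add: orbit_Suc_T[symmetric])
  then show ?case using Suc T_inj by blast
qed

lemma orbit_periodic:
  assumes "orbit a b x1 k = orbit a b x1 0"
  shows "orbit a b x1 (n + k) = orbit a b x1 n"
  using assms by (induction n) (simp_all add: orbit_Suc_T)

lemma orbit_mod:
  assumes "orbit a b x1 k = orbit a b x1 0" "k > 0"
  shows "orbit a b x1 n = orbit a b x1 (n mod k)"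
proof (induction n rule: less_induct)
  case (less n)
  show ?case
  proof (cases "n < k")
    case True then show ?thesis by simp
  next
    case False
    then have "n = (n - k) + k" by simp
    then have "orbit a b x1 n = orbit a b x1 (n - k)"
      using orbit_periodic[OF assms(1)] by metis
    also have "\<dots> = orbit a b x1 ((n - k) mod k)" using less False assms(2) by simp
    also have "(n - k) mod k = n mod k" using False by (simp add: le_mod_geq)
    finally show ?thesis .
  qed
qed

lemma orbit_int:
  assumes "b \<noteq> 0"
  shows "\<exists>i j. orbit a b x1 n = (real_of_int a / real_of_int b + of_int i,
                                  x1 + of_int j / real_of_int b)"
proof (induction n)
  case 0 then show ?case by (rule exI[of _ 0], rule exI[of _ 0]) simp
next
  case (Suc n)
  then obtain i j where e: "orbit a b x1 n = (real_of_int a / real_of_int b + of_int i,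
                                  x1 + of_int j / real_of_int b)" by blast
  define s where "s = sgn (x1 + of_int j / real_of_int b)"
  have sI: "s \<in> \<int>" unfolding s_def by (simp add: sgn_real_def)
  then obtain m where m: "s = of_int m" by (auto elim: Ints_cases)
  have "orbit a b x1 (Suc n) = (real_of_int a / real_of_int b + of_int (i - m),
            x1 + of_int (j + a + b * (i - m)) / real_of_int b)"
  proof -
    have "orbit a b x1 (Suc n) = (real_of_int a / real_of_int b + of_int i - s,
        x1 + of_int j / real_of_int b + (real_of_int a / real_of_int b + of_int i - s))"
      by (simp only: orbit_Suc_T) (simp add: T_def e s_def)
    then show ?thesis using assms by (simp add: m field_simps)
  qed
  then show ?case by blast
qed

theorem mainTheorem4:
  fixes a b :: int and x1 :: real
  assumes "b > 0"
  shows "Bseq (\<lambda>n. snd (orbit a b x1 n)) \<longleftrightarrow>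
         (\<exists>k\<ge>1. orbit a b x1 k = orbit a b x1 0)"
proof
  assume "\<exists>k\<ge>1. orbit a b x1 k = orbit a b x1 0"
  then obtain k where k: "k \<ge> 1" "orbit a b x1 k = orbit a b x1 0" by blast
  define K where "K = Max ((\<lambda>n. norm (snd (orbit a b x1 n))) ` {..<k})"
  have "norm (snd (orbit a b x1 n)) \<le> K" for n
  proof -
    have "orbit a b x1 n = orbit a b x1 (n mod k)" using orbit_mod[OF k(2)] k(1) by simp
    moreover have "n mod k \<in> {..<k}" using k(1) by simp
    ultimately show ?thesis unfolding K_def by (metis (no_types, lifting) Max_ge finite_imageI finite_lessThan image_eqI)
  qed
  then show "Bseq (\<lambda>n. snd (orbit a b x1 n))" by (rule BseqI')
next
  assume "Bseq (\<lambda>n. snd (orbit a b x1 n))"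
  then obtain K where K: "\<And>n. norm (snd (orbit a b x1 n)) \<le> K" using BseqE by metis
  define f where "f = orbit a b x1"
  have bpos: "real_of_int b > 0" using assms by simp
  have pb: "\<bar>fst (f n)\<bar> \<le> 2 * K + \<bar>real_of_int a / real_of_int b\<bar>" for n
  proof (cases n)
    case 0 then show ?thesis using K[of 0] by (simp add: f_def)
  next
    case (Suc m)
    have "snd (f (Suc m)) = snd (f m) + fst (f (Suc m))"
      unfolding f_def by (simp only: orbit_Suc_T) (simp add: T_def)
    then have "fst (f (Suc m)) = snd (f (Suc m)) - snd (f m)" by simp
    moreover have "\<bar>snd (f (Suc m))\<bar> \<le> K" "\<bar>snd (f m)\<bar> \<le> K" using K[of "Suc m"] K[of m] by (simp_all add: f_def del: orbit.simps)
    moreover have "0 \<le> \<bar>real_of_int a / real_of_int b\<bar>" by simp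
    moreover have "\<bar>snd (f (Suc m)) - snd (f m)\<bar> \<le> \<bar>snd (f (Suc m))\<bar> + \<bar>snd (f m)\<bar>"
      by (rule abs_triangle_ineq4)
    ultimately have "\<bar>fst (f (Suc m))\<bar> \<le> 2 * K + \<bar>real_of_int a / real_of_int b\<bar>" by linarith
    then show ?thesis using Suc by simp
  qed
  define M where "M = nat (ceiling (2 * K + 2 * \<bar>real_of_int a / real_of_int b\<bar>
                          + real_of_int b * (K + \<bar>x1\<bar>)))"
  define g where "g = (\<lambda>(i::int, j::int). (real_of_int a / real_of_int b + of_int i,
                                  x1 + of_int j / real_of_int b))"
  have "range f \<subseteq> g ` ({-int M..int M} \<times> {-int M..int M})"
  proof
    fix y assume "y \<in> range f"
    then obtain n where y: "y = f n" by blast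
    obtain i j where e: "f n = (real_of_int a / real_of_int b + of_int i,
                                  x1 + of_int j / real_of_int b)"
      using orbit_int[of b a x1 n] assms f_def by auto
    have "\<bar>real_of_int a / real_of_int b + of_int i\<bar> \<le> 2 * K + \<bar>real_of_int a / real_of_int b\<bar>"
      using pb[of n] e by simp
    then have i1: "\<bar>real_of_int i\<bar> \<le> 2 * K + 2 * \<bar>real_of_int a / real_of_int b\<bar>" by linarith
    have "\<bar>x1 + of_int j / real_of_int b\<bar> \<le> K" using K[of n] e f_def by simp
    then have "\<bar>of_int j / real_of_int b\<bar> \<le> K + \<bar>x1\<bar>" by linarith
    then have "\<bar>real_of_int j\<bar> / real_of_int b \<le> K + \<bar>x1\<bar>" using bpos by simp
    then have j1: "\<bar>real_of_int j\<bar> \<le> real_of_int b * (K + \<bar>x1\<bar>)" using bpos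
      by (simp add: divide_le_eq mult.commute)
    have K0: "K \<ge> 0" using K[of 0] by (meson norm_ge_zero order.trans)
    have x0: "real_of_int b * (K + \<bar>x1\<bar>) \<ge> 0" using K0 bpos by simp
    have Mge: "2 * K + 2 * \<bar>real_of_int a / real_of_int b\<bar>
                          + real_of_int b * (K + \<bar>x1\<bar>) \<le> real_of_int (int M)"
      unfolding M_def of_int_of_nat_eq by (rule real_nat_ceiling_ge)
    have ab0: "0 \<le> \<bar>real_of_int a / real_of_int b\<bar>" by simp
    have i2: "\<bar>real_of_int i\<bar> \<le> real_of_int (int M)" using i1 x0 Mge by linarith
    have j2: "\<bar>real_of_int j\<bar> \<le> real_of_int (int M)" using j1 K0 Mge ab0 by linarith
    have "(i, j) \<in> {-int M..int M} \<times> {-int M..int M}"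
      using i2 j2 by (simp only: of_int_abs[symmetric] of_int_le_iff) auto
    then show "y \<in> g ` ({-int M..int M} \<times> {-int M..int M})"
      using y e unfolding g_def by force
  qed
  then have "finite (range f)" by (rule finite_subset) simp
  then have "\<not> inj f" using finite_imageD infinite_UNIV_nat by blast
  then obtain i j where ij: "i \<noteq> j" "f i = f j" unfolding inj_def by blast
  obtain i' j' where ij': "i' < j'" "f i' = f j'"
    using ij by (metis linorder_neq_iff)
  then have "orbit a b x1 (i' + (j' - i')) = orbit a b x1 i'" by (simp add: f_def)
  then have "orbit a b x1 (j' - i') = orbit a b x1 0" by (rule orbit_shift_back)
  then show "\<exists>k\<ge>1. orbit a b x1 k = orbit a b x1 0" using ij'(1)
    by (intro exI[of _ "j' - i'"]) simp
qed

end
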